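(* Let $A$ be a CFG-ring and $n,m\ge1$. A map $f:A^{n}\to A^{m}$ is contractive (i.e. $d(f(x),f(y))\le d(x,y)$ for all $x,y\in A^n$) if and only if there exist polynomials $f_1,\dots,f_m\in A[X_1,\dots,X_n]$ with $f(x)=(f_1(x),\dots,f_m(x))$ for all $x\in A^n$.
   Context: All rings are commutative with identity. A regular ring is a commutative von Neumann regular ring. For a regular ring $A$, $B(A)$ is the Boolean ring of idempotents of $A$ (product from $A$, sum $a\tilde+b=(a-b)^2$, $a\vee b=a+b-ab$, $a\le b\iff ab=a$), and $e(a)$ is the unique idempotent with $aA=e(a)A$. On $A^k$ the metric is $d((x_i),(y_i))=e(x_1-y_1)\vee\cdots\vee e(x_k-y_k)\in B(A)$. A Boolean metric space over a Boolean ring $B$: a set $X$ with $d:X\times X\to B$ satisfying $d(x,y)=0\iff x=y$, symmetry, and $d(x,z)\le d(x,y)\vee d(y,z)$. For $x_1,\dots,x_k\in X$, $a_1,\dots,a_k\in B$ pairwise disjoint with sum $1$, $x$ is a convex combination of the $x_i$ with coefficients $a_i$ if $a_id(x,x_i)=0$ for all $i$. $X$ is a CFG-space if all such convex combinations exist in $X$ and every element of $X$ is a convex combination of elements of some fixed finite subset of $X$. A CFG-ring is a regular ring $A$ such that $A$ with metric $d(x,y)=e(x-y)$ is a CFG-space over $B(A)$. *)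

theory Defs
  imports Main "HOL-Library.Poly_Mapping"
begin

definition regular_ring :: "'a::comm_ring_1 itself \<Rightarrow> bool" where
  "regular_ring _ \<longleftrightarrow> (\<forall>a::'a. \<exists>x. a * x * a = a)"

definition is_idem :: "'a::comm_ring_1 \<Rightarrow> bool" where
  "is_idem e \<longleftrightarrow> e * e = e"

definition ble :: "'a::comm_ring_1 \<Rightarrow> 'a \<Rightarrow> bool" where
  "ble a b \<longleftrightarrow> a * b = a"

definition bjoin :: "'a::comm_ring_1 \<Rightarrow> 'a \<Rightarrow> 'a" where
  "bjoin a b = a + b - a * b"

definition eid :: "'a::comm_ring_1 \<Rightarrow> 'a" where
  "eid a = (THE e. e * e = e \<and> range (\<lambda>x. a * x) = range (\<lambda>x. e * x))"

text \<open>Elements of A^k are represented as functions nat \<Rightarrow> A vanishing from index k on.\<close>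
definition vecs :: "nat \<Rightarrow> (nat \<Rightarrow> 'a::comm_ring_1) set" where
  "vecs k = {x. \<forall>i\<ge>k. x i = 0}"

definition vdist :: "nat \<Rightarrow> (nat \<Rightarrow> 'a::comm_ring_1) \<Rightarrow> (nat \<Rightarrow> 'a) \<Rightarrow> 'a" where
  "vdist k x y = foldr bjoin (map (\<lambda>i. eid (x i - y i)) [0..<k]) 0"

definition contractive :: "nat \<Rightarrow> nat \<Rightarrow> ((nat \<Rightarrow> 'a::comm_ring_1) \<Rightarrow> (nat \<Rightarrow> 'a)) \<Rightarrow> bool" where
  "contractive n m f \<longleftrightarrow> (\<forall>x\<in>vecs n. \<forall>y\<in>vecs n. ble (vdist m (f x) (f y)) (vdist n x y))"

text \<open>Coefficients: idempotents, pairwise disjoint, with sum 1 (for pairwise disjoint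
  idempotents the Boolean-ring sum coincides with the ring sum).\<close>
definition coeff_family :: "'a::comm_ring_1 list \<Rightarrow> bool" where
  "coeff_family as \<longleftrightarrow> (\<forall>i<length as. is_idem (as ! i))
     \<and> (\<forall>i<length as. \<forall>j<length as. i \<noteq> j \<longrightarrow> as ! i * as ! j = 0)
     \<and> sum_list as = 1"

text \<open>x is a convex combination of xs with coefficients as (metric d(x,y) = e(x-y)).\<close>
definition convex_comb :: "'a::comm_ring_1 \<Rightarrow> 'a list \<Rightarrow> 'a list \<Rightarrow> bool" where
  "convex_comb x xs as \<longleftrightarrow> length xs = length as \<and> coeff_family as
     \<and> (\<forall>i<length as. as ! i * eid (x - xs ! i) = 0)"

definition CFG_ring :: "'a::comm_ring_1 itself \<Rightarrow> bool" where
  "CFG_ring T \<longleftrightarrow> regular_ring T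
     \<and> (\<forall>(xs::'a list) as. length xs = length as \<and> coeff_family as \<longrightarrow> (\<exists>x. convex_comb x xs as))
     \<and> (\<exists>F::'a set. finite F \<and> (\<forall>x. \<exists>xs as. set xs \<subseteq> F \<and> convex_comb x xs as))"

type_synonym monomial = "(nat, nat) poly_mapping"
type_synonym 'a mpoly = "(monomial, 'a) poly_mapping"


text \<open>A polynomial in A[X_0,...,X_{n-1}]: finitely supported map from monomials
  (finitely supported exponent vectors) to coefficients.\<close>
definition mpoly_in_vars :: "nat \<Rightarrow> 'a::comm_ring_1 mpoly \<Rightarrow> bool" where
  "mpoly_in_vars n p \<longleftrightarrow> (\<forall>mn::monomial. mn \<in> Poly_Mapping.keys p \<longrightarrow> Poly_Mapping.keys mn \<subseteq> {..<n})"

definition mpoly_eval :: "'a::comm_ring_1 mpoly \<Rightarrow> (nat \<Rightarrow> 'a) \<Rightarrow> 'a" where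
  "mpoly_eval p x = (\<Sum>mn \<in> Poly_Mapping.keys p. Poly_Mapping.lookup p mn * (\<Prod>i \<in> Poly_Mapping.keys mn. x i ^ Poly_Mapping.lookup mn i))"

end

theory Submission
  imports Defs "HOL-Library.FuncSet"
begin

lemma eid_props:
  fixes z :: "'a::comm_ring_1"
  assumes reg: "regular_ring TYPE('a)"
  shows "eid z * eid z = eid z \<and> z * eid z = z \<and> (\<exists>t. eid z = z * t)"
proof -
  obtain w where w: "z * w * z = z" using reg unfolding regular_ring_def by blast
  define e0 where "e0 = z * w"
  have "e0 * e0 = (z * w * z) * w" unfolding e0_def by (simp add: mult.assoc)
  then have i0: "e0 * e0 = e0" using w by (simp add: e0_def)
  have ez: "e0 * z = z" unfolding e0_def using w by simp
  have r0: "range (\<lambda>x. z * x) = range (\<lambda>x. e0 * x)"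
  proof (intro set_eqI iffI)
    fix a assume "a \<in> range (\<lambda>x. z * x)"
    then obtain x where "a = z * x" by auto
    then have "a = e0 * (z * x)" using ez by (simp add: mult.assoc[symmetric])
    then show "a \<in> range (\<lambda>x. e0 * x)" by blast
  next
    fix a assume "a \<in> range (\<lambda>x. e0 * x)"
    then obtain x where "a = e0 * x" by auto
    then have "a = z * (w * x)" unfolding e0_def by (simp add: mult.assoc)
    then show "a \<in> range (\<lambda>x. z * x)" by blast
  qed
  have uniq: "e = e0" if h1: "e * e = e" and h2: "range (\<lambda>x. z * x) = range (\<lambda>x. e * x)" for e
  proof -
    have "e \<in> range (\<lambda>x. e * x)" by (rule range_eqI[of _ _ 1]) simp
    then obtain s where s: "e = z * s" using h2 by auto
    have "z \<in> range (\<lambda>x. z * x)" by (rule range_eqI[of _ _ 1]) simp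
    then obtain r where r: "z = e * r" using h2 by auto
    have "e * z = (e * e) * r" using r by (simp add: mult.assoc)
    then have ez': "e * z = z" using r h1 by simp
    have a1: "e * e0 = e0" unfolding e0_def using ez' by (simp add: mult.assoc[symmetric])
    have a2: "e0 * e = e" using s ez by (simp add: mult.assoc[symmetric])
    show ?thesis using a1 a2 by (simp add: mult.commute)
  qed
  have "eid z = e0" unfolding eid_def
  proof (rule the_equality)
    show "e0 * e0 = e0 \<and> range (\<lambda>x. z * x) = range (\<lambda>x. e0 * x)" using i0 r0 by simp
  next
    fix e assume "e * e = e \<and> range (\<lambda>x. z * x) = range (\<lambda>x. e * x)"
    then show "e = e0" using uniq by blast
  qed
  then show ?thesis using i0 ez by (auto simp: e0_def mult.commute)
qed

lemma kill1: "u * a = 0 \<Longrightarrow> u * (b * a) = (0::'a::comm_ring_1)"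
proof -
  assume "u * a = 0"
  moreover have "u * (b * a) = b * (u * a)" by (rule mult.left_commute)
  ultimately show ?thesis by simp
qed
lemma kill2: "u * a = 0 \<Longrightarrow> u * (a * b) = (0::'a::comm_ring_1)"
  by (simp add: mult.assoc[symmetric])
lemma kill3: "u * a = 0 \<Longrightarrow> (u * b) * a = (0::'a::comm_ring_1)"
proof -
  assume "u * a = 0"
  moreover have "(u * b) * a = b * (u * a)" by (simp add: mult.assoc mult.commute)
  ultimately show ?thesis by simp
qed

lemma eid_zero_iff:
  fixes z u :: "'a::comm_ring_1"
  assumes reg: "regular_ring TYPE('a)"
  shows "u * eid z = 0 \<longleftrightarrow> u * z = 0"
proof -
  from eid_props[OF reg, of z] obtain t where t: "eid z = z * t" and zz: "z * eid z = z" by blast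
  show ?thesis
  proof
    assume "u * eid z = 0"
    then have "u * (z * eid z) = 0" by (rule kill1)
    then show "u * z = 0" using zz by simp
  next
    assume "u * z = 0" then show "u * eid z = 0" using t kill2 by simp
  qed
qed

lemma foldr_bjoin_compl:
  "1 - foldr bjoin L (0::'a::comm_ring_1) = prod_list (map (\<lambda>a. 1 - a) L)"
proof (induction L)
  case (Cons a L)
  have "1 - foldr bjoin (a#L) 0 = (1-a)*(1 - foldr bjoin L (0::'a))" by (simp add: bjoin_def algebra_simps)
  then show ?case using Cons by simp
qed simp

lemma foldr_bjoin_kill:
  "(\<forall>a\<in>set L. u * a = 0) \<Longrightarrow> u * foldr bjoin L (0::'a::comm_ring_1) = 0"
  by (induction L) (auto simp: bjoin_def algebra_simps)

lemma prod_list_elem: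
  "x \<in> set L \<Longrightarrow> \<exists>r. prod_list (map g L) = g x * (r::'b::comm_monoid_mult)"
proof (induction L)
  case (Cons a L)
  show ?case
  proof (cases "x = a")
    case True then show ?thesis by (intro exI[of _ "prod_list (map g L)"]) simp
  next
    case False
    with Cons obtain r where "prod_list (map g L) = g x * r" by auto
    then show ?thesis by (intro exI[of _ "g a * r"]) (simp add: mult.left_commute)
  qed
qed simp

lemma foldr_bjoin_le:
  fixes a :: "'a::comm_ring_1"
  assumes "a \<in> set L" "a * a = a"
  shows "a * (1 - foldr bjoin L 0) = 0"
proof -
  obtain r where "prod_list (map (\<lambda>a. 1 - a) L) = (1 - a) * r"
    using prod_list_elem[OF assms(1)] by blast
  then have "a * (1 - foldr bjoin L 0) = a * ((1 - a) * r)"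
    by (simp only: foldr_bjoin_compl)
  also have "\<dots> = (a - a * a) * r" by (simp add: algebra_simps)
  finally show ?thesis using assms(2) by simp
qed

definition local_fn :: "nat \<Rightarrow> nat \<Rightarrow> ((nat \<Rightarrow> 'a::comm_ring_1) \<Rightarrow> (nat \<Rightarrow> 'a)) \<Rightarrow> bool" where
  "local_fn n m f \<longleftrightarrow> (\<forall>x\<in>vecs n. \<forall>y\<in>vecs n. \<forall>e. (\<forall>i<n. e * (x i - y i) = 0) \<longrightarrow> (\<forall>j<m. e * (f x j - f y j) = 0))"

lemma contractive_iff_local:
  fixes f :: "(nat \<Rightarrow> 'a::comm_ring_1) \<Rightarrow> (nat \<Rightarrow> 'a)"
  assumes reg: "regular_ring TYPE('a)"
  shows "contractive n m f \<longleftrightarrow> local_fn n m f"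
proof
  assume c: "contractive n m f"
  show "local_fn n m f" unfolding local_fn_def
  proof (intro ballI allI impI)
    fix x y :: "nat \<Rightarrow> 'a" and e :: 'a and j assume x: "x \<in> vecs n" and y: "y \<in> vecs n" and ex: "\<forall>i<n. e * (x i - y i) = 0" and j: "j < m"
    define g where "g = eid e"
    obtain t where t: "g = e * t" and eg: "e * g = e" using eid_props[OF reg, of e] unfolding g_def by blast
    let ?D = "vdist n x y" and ?D' = "vdist m (f x) (f y)"
    have "g * ?D = 0" unfolding vdist_def
    proof (rule foldr_bjoin_kill, clarsimp)
      fix i assume "i < n"
      then have "e * t * (x i - y i) = 0" using ex kill3[of e "x i - y i" t] by (simp add: mult.commute)
      then have "g * (x i - y i) = 0" using t by simp
      then show "g * eid (x i - y i) = 0" using eid_zero_iff[OF reg] by blast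
    qed
    moreover have "?D' * ?D = ?D'" using c x y unfolding contractive_def ble_def by blast
    ultimately have gD': "g * ?D' = 0" using kill2[of g ?D ?D'] by (simp add: mult.commute)
    let ?a = "eid (f x j - f y j)"
    have "?a * (1 - ?D') = 0" unfolding vdist_def
      by (rule foldr_bjoin_le) (use j eid_props[OF reg] in auto)
    then have "?a = ?a * ?D'" by (simp add: algebra_simps)
    then have "g * ?a = 0" using gD' kill1[of g ?D' ?a] by (simp add: mult.commute)
    then have "g * (f x j - f y j) = 0" using eid_zero_iff[OF reg] by blast
    have "e * (f x j - f y j) = (e * g) * (f x j - f y j)" using eg by simp
    also have "\<dots> = e * (g * (f x j - f y j))" by (simp add: mult.assoc)
    finally show "e * (f x j - f y j) = 0" using \<open>g * (f x j - f y j) = 0\<close> by simp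
  qed
next
  assume l: "local_fn n m f"
  show "contractive n m f" unfolding contractive_def ble_def
  proof (intro ballI)
    fix x y :: "nat \<Rightarrow> 'a" assume x: "x \<in> vecs n" and y: "y \<in> vecs n"
    let ?D = "vdist n x y" and ?D' = "vdist m (f x) (f y)"
    define u where "u = 1 - ?D"
    have "\<forall>i<n. u * (x i - y i) = 0"
    proof (intro allI impI)
      fix i assume "i < n"
      then have "eid (x i - y i) \<in> set (map (\<lambda>i. eid (x i - y i)) [0..<n])" by auto
      from prod_list_elem[OF this, of "\<lambda>a. 1 - a"] obtain r where
        "prod_list (map (\<lambda>a. 1 - a) (map (\<lambda>i. eid (x i - y i)) [0..<n])) = (1 - eid (x i - y i)) * r" by blast
      then have "u = (1 - eid (x i - y i)) * r"
        unfolding u_def vdist_def foldr_bjoin_compl .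
      moreover have "(1 - eid (x i - y i)) * (x i - y i) = 0"
        using eid_props[OF reg, of "x i - y i"] by (simp add: algebra_simps)
      ultimately show "u * (x i - y i) = 0" using kill3[of "1 - eid (x i - y i)" "x i - y i" r] by (simp add: mult.commute)
    qed
    then have "\<forall>j<m. u * (f x j - f y j) = 0" using l x y unfolding local_fn_def by blast
    then have uD: "u * ?D' = 0" unfolding vdist_def
    proof (intro foldr_bjoin_kill, clarsimp)
      fix j assume "\<forall>j<m. u * (f x j - f y j) = 0" "j < m"
      then show "u * eid (f x j - f y j) = 0" using eid_zero_iff[OF reg] by blast
    qed
    have "u * ?D' = ?D' - ?D' * ?D" unfolding u_def by (simp add: algebra_simps)
    then show "?D' * ?D = ?D'" using uD by simp
  qed
qed

section \<open>Polynomial evaluation\<close>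

definition mon :: "monomial \<Rightarrow> (nat \<Rightarrow> 'a::comm_ring_1) \<Rightarrow> 'a" where
  "mon mn x = (\<Prod>i\<in>Poly_Mapping.keys mn. x i ^ Poly_Mapping.lookup mn i)"

lemma mon_superset:
  assumes "finite S" "Poly_Mapping.keys mn \<subseteq> S"
  shows "mon mn x = (\<Prod>i\<in>S. x i ^ Poly_Mapping.lookup mn i)"
  unfolding mon_def
  by (rule prod.mono_neutral_left) (use assms in \<open>auto simp: in_keys_iff\<close>)

lemma mon_add: "mon (a + b) x = mon a x * mon b x"
proof -
  let ?S = "Poly_Mapping.keys a \<union> Poly_Mapping.keys b"
  have "mon (a + b) x = (\<Prod>i\<in>?S. x i ^ Poly_Mapping.lookup (a + b) i)"
    by (rule mon_superset) (auto simp: keys_add)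
  also have "\<dots> = (\<Prod>i\<in>?S. x i ^ Poly_Mapping.lookup a i * x i ^ Poly_Mapping.lookup b i)"
    by (simp add: lookup_add power_add)
  also have "\<dots> = (\<Prod>i\<in>?S. x i ^ Poly_Mapping.lookup a i) * (\<Prod>i\<in>?S. x i ^ Poly_Mapping.lookup b i)"
    by (rule prod.distrib)
  also have "\<dots> = mon a x * mon b x"
    by (simp add: mon_superset[symmetric])
  finally show ?thesis .
qed

lemma mon_zero [simp]: "mon 0 x = 1"
  by (simp add: mon_def)

lemma eval_superset:
  assumes "finite S" "Poly_Mapping.keys p \<subseteq> S"
  shows "mpoly_eval p x = (\<Sum>m\<in>S. Poly_Mapping.lookup p m * mon m x)"
  unfolding mpoly_eval_def mon_def[symmetric]
  by (rule sum.mono_neutral_left) (use assms in \<open>auto simp: in_keys_iff\<close>)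

lemma eval_add: "mpoly_eval (p + q) x = mpoly_eval p x + mpoly_eval q x"
proof -
  let ?S = "Poly_Mapping.keys p \<union> Poly_Mapping.keys q"
  have "mpoly_eval (p + q) x = (\<Sum>m\<in>?S. Poly_Mapping.lookup (p + q) m * mon m x)"
    by (rule eval_superset) (auto simp: keys_add)
  also have "\<dots> = (\<Sum>m\<in>?S. Poly_Mapping.lookup p m * mon m x) + (\<Sum>m\<in>?S. Poly_Mapping.lookup q m * mon m x)"
    by (simp add: lookup_add distrib_right sum.distrib)
  also have "\<dots> = mpoly_eval p x + mpoly_eval q x"
    by (simp add: eval_superset[symmetric])
  finally show ?thesis .
qed

lemma eval_zero [simp]: "mpoly_eval 0 x = 0"
  by (simp add: mpoly_eval_def)

lemma eval_single: "mpoly_eval (Poly_Mapping.single m c) x = c * mon m x"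
proof -
  have "mpoly_eval (Poly_Mapping.single m c) x = (\<Sum>m'\<in>{m}. Poly_Mapping.lookup (Poly_Mapping.single m c) m' * mon m' x)"
    by (rule eval_superset) auto
  then show ?thesis by simp
qed

lemma eval_neg: "mpoly_eval (- p) x = - mpoly_eval p x"
proof -
  have "mpoly_eval (p + - p) x = 0" by simp
  then show ?thesis unfolding eval_add by (simp add: add_eq_0_iff)
qed

lemma update_eq_add:
  "a \<notin> Poly_Mapping.keys f \<Longrightarrow> Poly_Mapping.update a b f = f + Poly_Mapping.single a b"
  by (rule poly_mapping_eqI) (auto simp: lookup_update lookup_add lookup_single in_keys_iff when_def)

lemma eval_mult_single:
  "mpoly_eval (Poly_Mapping.single a b * q) x = b * mon a x * mpoly_eval (q :: 'a::comm_ring_1 mpoly) x"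
proof (induction q rule: update_induct)
  case const then show ?case by simp
next
  case (update f c d)
  have "Poly_Mapping.single a b * Poly_Mapping.update c d f
      = Poly_Mapping.single a b * f + Poly_Mapping.single (a + c) (b * d)"
    using update(1) by (simp add: update_eq_add distrib_left mult_single)
  then show ?case using update(3) update(1)
    by (simp add: eval_add eval_single mon_add update_eq_add algebra_simps)
qed

lemma eval_mult: "mpoly_eval (p * q) x = mpoly_eval p x * mpoly_eval (q :: 'a::comm_ring_1 mpoly) x"
proof (induction p rule: update_induct)
  case const then show ?case by simp
next
  case (update f c d)
  have "Poly_Mapping.update c d f * q = f * q + Poly_Mapping.single c d * q"
    using update(1) by (simp add: update_eq_add distrib_right)
  then have "mpoly_eval (Poly_Mapping.update c d f * q) x = mpoly_eval f x * mpoly_eval q x + d * mon c x * mpoly_eval q x"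
    using update(3) by (simp only: eval_add eval_mult_single)
  moreover have "mpoly_eval (Poly_Mapping.update c d f) x = mpoly_eval f x + d * mon c x"
    by (simp only: update_eq_add[OF update(1)] eval_add eval_single)
  ultimately show ?case by (simp add: algebra_simps)
qed

lemma in_vars_add: "mpoly_in_vars n p \<Longrightarrow> mpoly_in_vars n q \<Longrightarrow> mpoly_in_vars n (p + q)"
  unfolding mpoly_in_vars_def
proof (intro allI impI)
  fix mn assume p: "\<forall>mn. mn \<in> Poly_Mapping.keys p \<longrightarrow> Poly_Mapping.keys mn \<subseteq> {..<n}"
    and q: "\<forall>mn. mn \<in> Poly_Mapping.keys q \<longrightarrow> Poly_Mapping.keys mn \<subseteq> {..<n}"
    and mn: "mn \<in> Poly_Mapping.keys (p + q)"
  have "mn \<in> Poly_Mapping.keys p \<union> Poly_Mapping.keys q" using mn keys_add[of p q] by (rule subsetD[rotated])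
  then show "Poly_Mapping.keys mn \<subseteq> {..<n}" using p q by blast
qed

lemma in_vars_neg: "mpoly_in_vars n p \<Longrightarrow> mpoly_in_vars n (- p)"
proof -
  have "Poly_Mapping.keys (- p) = Poly_Mapping.keys p" by (simp add: in_keys_iff set_eq_iff)
  then show "mpoly_in_vars n p \<Longrightarrow> mpoly_in_vars n (- p)" unfolding mpoly_in_vars_def by simp
qed

lemma in_vars_mult: "mpoly_in_vars n p \<Longrightarrow> mpoly_in_vars n q \<Longrightarrow> mpoly_in_vars n (p * q)"
  unfolding mpoly_in_vars_def
proof (intro allI impI)
  fix mn assume p: "\<forall>mn. mn \<in> Poly_Mapping.keys p \<longrightarrow> Poly_Mapping.keys mn \<subseteq> {..<n}"
    and q: "\<forall>mn. mn \<in> Poly_Mapping.keys q \<longrightarrow> Poly_Mapping.keys mn \<subseteq> {..<n}"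
    and mn: "mn \<in> Poly_Mapping.keys (p * q)"
  have "mn \<in> {a + b | a b. a \<in> Poly_Mapping.keys p \<and> b \<in> Poly_Mapping.keys q}"
    using mn keys_mult[of p q] by (rule subsetD[rotated])
  then obtain a b where ab: "mn = a + b" "a \<in> Poly_Mapping.keys p" "b \<in> Poly_Mapping.keys q"
    by blast
  have "Poly_Mapping.keys mn \<subseteq> Poly_Mapping.keys a \<union> Poly_Mapping.keys b"
    unfolding ab(1) by (rule keys_add)
  moreover have "Poly_Mapping.keys a \<subseteq> {..<n}" "Poly_Mapping.keys b \<subseteq> {..<n}"
    using p q ab by auto
  ultimately show "Poly_Mapping.keys mn \<subseteq> {..<n}" by blast
qed

definition polyfun :: "nat \<Rightarrow> ((nat \<Rightarrow> 'a::comm_ring_1) \<Rightarrow> 'a) \<Rightarrow> bool" where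
  "polyfun n g \<longleftrightarrow> (\<exists>p. mpoly_in_vars n p \<and> (\<forall>x. g x = mpoly_eval p x))"

lemma polyfun_const: "polyfun n (\<lambda>x. c)"
  unfolding polyfun_def
  by (intro exI[of _ "Poly_Mapping.single 0 c"]) (auto simp: mpoly_in_vars_def eval_single split: if_splits)

lemma polyfun_var: "i < n \<Longrightarrow> polyfun n (\<lambda>x. x i)"
  unfolding polyfun_def
  by (intro exI[of _ "Poly_Mapping.single (Poly_Mapping.single i 1) 1"])
     (auto simp: mpoly_in_vars_def eval_single mon_def)

lemma polyfun_add: "polyfun n g \<Longrightarrow> polyfun n h \<Longrightarrow> polyfun n (\<lambda>x. g x + h x)"
  unfolding polyfun_def using in_vars_add eval_add by metis

lemma polyfun_mult: "polyfun n g \<Longrightarrow> polyfun n h \<Longrightarrow> polyfun n (\<lambda>x. g x * h x)"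
  unfolding polyfun_def using in_vars_mult eval_mult by metis

lemma polyfun_neg: "polyfun n g \<Longrightarrow> polyfun n (\<lambda>x. - g x)"
  unfolding polyfun_def using in_vars_neg eval_neg by metis

lemma polyfun_diff: "polyfun n g \<Longrightarrow> polyfun n h \<Longrightarrow> polyfun n (\<lambda>x. g x - h x)"
  using polyfun_add[OF _ polyfun_neg, of n g h] by simp

lemma polyfun_pow: "polyfun n g \<Longrightarrow> polyfun n (\<lambda>x. g x ^ k)"
  by (induction k) (simp_all add: polyfun_const polyfun_mult)

lemma polyfun_prod: "(\<And>i. i \<in> S \<Longrightarrow> polyfun n (g i)) \<Longrightarrow> polyfun n (\<lambda>x. \<Prod>i\<in>S. g i x)"
proof (induction S rule: infinite_finite_induct)
  case (infinite S) then show ?case by (simp add: polyfun_const)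
next
  case empty then show ?case by (simp add: polyfun_const)
next
  case (insert a S) then show ?case by (simp add: polyfun_mult)
qed

section \<open>Locality of polynomials\<close>

lemma congr_mult:
  fixes e a b c d :: "'a::comm_ring_1"
  assumes "e * a = e * b" "e * c = e * d"
  shows "e * (a * c) = e * (b * d)"
proof -
  have "e * (a * c) = c * (e * a)" by (simp add: ac_simps)
  also have "\<dots> = c * (e * b)" using assms(1) by simp
  also have "\<dots> = b * (e * c)" by (simp add: ac_simps)
  also have "\<dots> = b * (e * d)" using assms(2) by simp
  also have "\<dots> = e * (b * d)" by (simp add: ac_simps)
  finally show ?thesis .
qed

lemma congr_pow:
  fixes e a b :: "'a::comm_ring_1"
  assumes "e * a = e * b"
  shows "e * a ^ k = e * b ^ k"
proof (induction k)
  case (Suc k)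
  show ?case using congr_mult[OF assms Suc.IH] by simp
qed simp

lemma congr_prod:
  fixes e :: "'a::comm_ring_1"
  assumes "\<And>i. i \<in> S \<Longrightarrow> e * a i = e * b i"
  shows "e * prod a S = e * prod b S"
  using assms
proof (induction S rule: infinite_finite_induct)
  case (insert x S)
  have "e * (a x * prod a S) = e * (b x * prod b S)"
    by (rule congr_mult) (use insert in auto)
  then show ?case using insert(1,2) by simp
qed simp_all

lemma eval_local:
  fixes e :: "'a::comm_ring_1"
  assumes p: "mpoly_in_vars n p" and xy: "\<forall>i<n. e * (x i - y i) = 0"
  shows "e * mpoly_eval p x = e * mpoly_eval p y"
proof -
  have "e * (Poly_Mapping.lookup p m * mon m x) = e * (Poly_Mapping.lookup p m * mon m y)"
    if m: "m \<in> Poly_Mapping.keys p" for m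
  proof -
    have "e * mon m x = e * mon m y" unfolding mon_def
    proof (rule congr_prod)
      fix i assume "i \<in> Poly_Mapping.keys m"
      then have "i < n" using p m unfolding mpoly_in_vars_def by blast
      then have "e * x i = e * y i" using xy by (simp add: right_diff_distrib)
      then show "e * x i ^ Poly_Mapping.lookup m i = e * y i ^ Poly_Mapping.lookup m i"
        by (rule congr_pow)
    qed
    then show ?thesis by (rule congr_mult[OF refl])
  qed
  then show ?thesis unfolding mpoly_eval_def mon_def[symmetric] sum_distrib_left
    by (intro sum.cong) auto
qed

section \<open>CFG-rings: decompositions\<close>

lemma alpha_exists:
  fixes z :: "'a::comm_ring_1"
  assumes reg: "regular_ring TYPE('a)" and F: "finite F" and xs: "set xs \<subseteq> F"
    and cc: "convex_comb z xs as"
  shows "\<exists>\<alpha>. (\<Sum>c\<in>F. \<alpha> c) = 1 \<and> (\<forall>c. \<alpha> c * (z - c) = 0)"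
proof -
  let ?L = "length as"
  define \<alpha> where "\<alpha> c = (\<Sum>i\<in>{i. i \<in> {..<?L} \<and> xs ! i = c}. as ! i)" for c
  have len: "length xs = ?L" using cc unfolding convex_comb_def by simp
  have "(\<Sum>c\<in>F. \<alpha> c) = (\<Sum>i\<in>{..<?L}. as ! i)"
    unfolding \<alpha>_def
  proof (rule sum.group)
    show "(\<lambda>i. xs ! i) ` {..<?L} \<subseteq> F" using xs len by auto
  qed (use F in auto)
  also have "\<dots> = sum_list as" by (simp add: sum_list_sum_nth atLeast0LessThan)
  also have "\<dots> = 1" using cc unfolding convex_comb_def coeff_family_def by simp
  finally have s: "(\<Sum>c\<in>F. \<alpha> c) = 1" .
  have k: "\<alpha> c * (z - c) = 0" for c
  proof -
    have "\<alpha> c * (z - c) = (\<Sum>i\<in>{i. i \<in> {..<?L} \<and> xs ! i = c}. as ! i * (z - xs ! i))"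
      unfolding \<alpha>_def sum_distrib_right by (intro sum.cong) auto
    also have "\<dots> = 0"
    proof (intro sum.neutral ballI)
      fix i assume "i \<in> {i. i \<in> {..<?L} \<and> xs ! i = c}"
      then have "as ! i * eid (z - xs ! i) = 0" using cc unfolding convex_comb_def by auto
      then show "as ! i * (z - xs ! i) = 0" using eid_zero_iff[OF reg] by blast
    qed
    finally show ?thesis .
  qed
  show ?thesis using s k by blast
qed

lemma blocks_exist:
  fixes z :: "nat \<Rightarrow> 'a::comm_ring_1"
  assumes reg: "regular_ring TYPE('a)" and F: "finite F"
    and cover: "\<forall>x::'a. \<exists>xs as. set xs \<subseteq> F \<and> convex_comb x xs as"
  shows "\<exists>\<beta>. (\<Sum>v\<in>PiE {..<k} (\<lambda>_. F). \<beta> v) = 1 \<and>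
              (\<forall>v\<in>PiE {..<k} (\<lambda>_. F). \<forall>j<k. \<beta> v * (z j - v j) = 0)"
proof -
  have "\<forall>j. \<exists>a. (\<Sum>c\<in>F. a c) = 1 \<and> (\<forall>c. a c * (z j - c) = 0)"
  proof
    fix j
    obtain xs as where "set xs \<subseteq> F" "convex_comb (z j) xs as" using cover by blast
    then show "\<exists>a. (\<Sum>c\<in>F. a c) = 1 \<and> (\<forall>c. a c * (z j - c) = 0)"
      using alpha_exists[OF reg F] by blast
  qed
  then obtain \<alpha> where \<alpha>: "\<And>j. (\<Sum>c\<in>F. \<alpha> j c) = 1" "\<And>j c. \<alpha> j c * (z j - c) = 0"
    using choice[of "\<lambda>j a. (\<Sum>c\<in>F. a c) = 1 \<and> (\<forall>c. a c * (z j - c) = 0)"] by blast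
  define \<beta> where "\<beta> v = (\<Prod>j\<in>{..<k}. \<alpha> j (v j))" for v
  have "(\<Sum>v\<in>PiE {..<k} (\<lambda>_. F). \<beta> v) = (\<Prod>j\<in>{..<k}. \<Sum>c\<in>F. \<alpha> j c)"
    unfolding \<beta>_def by (rule prod_sum_PiE[symmetric]) (use F in auto)
  also have "\<dots> = 1" using \<alpha>(1) by simp
  finally have s: "(\<Sum>v\<in>PiE {..<k} (\<lambda>_. F). \<beta> v) = 1" .
  have "\<beta> v * (z j - v j) = 0" if "j < k" for v j
  proof -
    have "\<beta> v = \<alpha> j (v j) * (\<Prod>i\<in>{..<k} - {j}. \<alpha> i (v i))"
      unfolding \<beta>_def using that by (simp add: prod.remove)
    then show ?thesis using \<alpha>(2)[of j "v j"] kill3 by (simp add: mult.commute)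
  qed
  then show ?thesis using s by blast
qed

lemma kill_pow:
  fixes e d :: "'a::comm_ring_1"
  assumes "e * d = 0" "N \<ge> 1"
  shows "e * d ^ N = 0"
proof -
  obtain M where "N = Suc M" using assms(2) by (cases N) auto
  then show ?thesis using assms(1) kill2[of e d "d ^ M"] by simp
qed

lemma power_idem:
  fixes y :: "'a::comm_ring_1"
  assumes reg: "regular_ring TYPE('a)" and F: "finite F"
    and cover: "\<forall>x::'a. \<exists>xs as. set xs \<subseteq> F \<and> convex_comb x xs as"
  shows "y ^ (fact (card F)) * y ^ (fact (card F)) = y ^ (fact (card F))"
proof -
  define T where "T = card F"
  define N :: nat where "N = fact T"
  let ?P = "PiE {..<Suc T} (\<lambda>_. F)"
  obtain \<beta> where s: "(\<Sum>v\<in>?P. \<beta> v) = 1"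
    and k: "\<And>v j. v \<in> ?P \<Longrightarrow> j < Suc T \<Longrightarrow> \<beta> v * (y ^ Suc j - v j) = 0"
    using blocks_exist[OF reg F cover, where z="\<lambda>j. y ^ Suc j" and k="Suc T"] by blast
  have blk: "\<beta> v * (y ^ N * y ^ N) = \<beta> v * y ^ N" if v: "v \<in> ?P" for v
  proof -
    have "\<not> inj_on v {..<Suc T}"
    proof
      assume "inj_on v {..<Suc T}"
      moreover have "v ` {..<Suc T} \<subseteq> F" using v by auto
      ultimately have "card {..<Suc T} \<le> card F" using F by (rule card_inj_on_le)
      then show False unfolding T_def by simp
    qed
    then obtain j l where jl: "j < l" "l < Suc T" "v j = v l"
      unfolding inj_on_def by (metis lessThan_iff linorder_neqE_nat)
    have "\<beta> v * y ^ Suc j = \<beta> v * v j" using k[OF v, of j] jl by (simp add: right_diff_distrib)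
    moreover have "\<beta> v * y ^ Suc l = \<beta> v * v l" using k[OF v, of l] jl by (simp add: right_diff_distrib)
    ultimately have eq: "\<beta> v * y ^ Suc j = \<beta> v * y ^ Suc l" using jl by simp
    define a where "a = Suc j"
    define p where "p = l - j"
    have eq': "\<beta> v * y ^ (a + p) = \<beta> v * y ^ a" using eq jl unfolding a_def p_def by simp
    have per: "\<beta> v * y ^ (a + p * t) = \<beta> v * y ^ a" for t
    proof (induction t)
      case (Suc t)
      have "\<beta> v * y ^ (a + p * Suc t) = (\<beta> v * y ^ (a + p)) * y ^ (p * t)"
        by (simp add: power_add mult.assoc)
      also have "\<dots> = \<beta> v * y ^ (a + p * t)" using eq' by (simp add: power_add mult.assoc)
      finally show ?case using Suc by simp
    qed simp
    have "a \<le> T" using jl unfolding a_def by simp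
    then have aN: "a \<le> N" unfolding N_def using fact_ge_self[of T] by linarith
    have "p dvd N" unfolding N_def p_def by (rule dvd_fact) (use jl in auto)
    then obtain t where t: "N = p * t" by blast
    have "\<beta> v * (y ^ N * y ^ N) = (\<beta> v * y ^ (a + p * t)) * y ^ (N - a)"
      using aN t by (simp add: power_add[symmetric] mult.assoc)
    also have "\<dots> = \<beta> v * y ^ a * y ^ (N - a)" using per by simp
    also have "\<dots> = \<beta> v * y ^ N" using aN by (simp add: power_add[symmetric] mult.assoc)
    finally show ?thesis .
  qed
  have "y ^ N * y ^ N = (\<Sum>v\<in>?P. \<beta> v) * (y ^ N * y ^ N)" using s by simp
  also have "\<dots> = (\<Sum>v\<in>?P. \<beta> v * y ^ N)" unfolding sum_distrib_right using blk by simp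
  also have "\<dots> = y ^ N" using s by (simp add: sum_distrib_right[symmetric])
  finally show ?thesis unfolding N_def T_def .
qed

lemma regular_pow:
  fixes y :: "'a::comm_ring_1"
  assumes reg: "regular_ring TYPE('a)"
  shows "\<exists>w. y = y ^ Suc k * w"
proof -
  obtain w where w: "y * w * y = y" using reg unfolding regular_ring_def by blast
  have "y = y ^ Suc k * w ^ k"
  proof (induction k)
    case (Suc k)
    have "y ^ Suc (Suc k) * w ^ Suc k = (y ^ Suc k * w ^ k) * (y * w)" by (simp add: ac_simps)
    also have "\<dots> = y * w * y" using Suc[symmetric] by (simp add: ac_simps)
    finally show ?case using w by simp
  qed simp
  then show ?thesis by blast
qed

lemma one_minus_pow_kill:
  fixes y :: "'a::comm_ring_1"
  assumes reg: "regular_ring TYPE('a)" and idem: "y ^ N * y ^ N = y ^ N"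
  shows "(1 - y ^ N) * y = 0"
proof -
  obtain w where w: "y = y ^ Suc N * w" using regular_pow[OF reg] by blast
  have "(1 - y ^ N) * y = (1 - y ^ N) * (y ^ N * (y * w))" using w by (simp add: ac_simps)
  also have "\<dots> = (y ^ N - y ^ N * y ^ N) * (y * w)" by (simp add: algebra_simps)
  also have "\<dots> = 0" using idem by simp
  finally show ?thesis .
qed

section \<open>Interpolation\<close>

primrec itp :: "('v \<Rightarrow> 'x \<Rightarrow> 'a::comm_ring_1) \<Rightarrow> ('v \<Rightarrow> 'a) \<Rightarrow> 'v list \<Rightarrow> 'x \<Rightarrow> 'a" where
  "itp D K [] x = 0"
| "itp D K (c # cs) x = D c x * K c + (1 - D c x) * itp D K cs x"

lemma itp_eq:
  "(\<forall>c\<in>set cs. D c x * (y - K c) = 0) \<Longrightarrow>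
     prod_list (map (\<lambda>c. 1 - D c x) cs) * y + itp D K cs x = y"
proof (induction cs)
  case (Cons c cs)
  then have ih: "itp D K cs x = y - prod_list (map (\<lambda>c. 1 - D c x) cs) * y"
    and d: "D c x * (y - K c) = 0" by (auto simp: eq_diff_eq add.commute)
  have "prod_list (map (\<lambda>c. 1 - D c x) (c # cs)) * y + itp D K (c # cs) x
        = y - D c x * (y - K c)"
    by (simp add: ih algebra_simps)
  then show ?case using d by simp
qed simp

lemma itp_poly:
  assumes "\<And>c. polyfun n (D c)"
  shows "polyfun n (itp D K cs)"
proof (induction cs)
  case Nil
  have "itp D K [] = (\<lambda>x. 0)" by (rule ext) simp
  then show ?case by (simp add: polyfun_const)
next
  case (Cons c cs)
  have e: "itp D K (c # cs) = (\<lambda>x. D c x * K c + (1 - D c x) * itp D K cs x)" by (rule ext) simp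
  have "polyfun n (\<lambda>x. D c x * K c)" by (rule polyfun_mult[OF assms polyfun_const])
  moreover have "polyfun n (\<lambda>x. 1 - D c x)" by (rule polyfun_diff[OF polyfun_const assms])
  then have "polyfun n (\<lambda>x. (1 - D c x) * itp D K cs x)"
    using polyfun_mult[OF _ Cons] by blast
  ultimately show ?case unfolding e by (rule polyfun_add)
qed

lemma forward:
  fixes f :: "(nat \<Rightarrow> 'a::comm_ring_1) \<Rightarrow> (nat \<Rightarrow> 'a)"
  assumes cfg: "CFG_ring TYPE('a)" and loc: "local_fn n m f"
  shows "\<exists>ps :: nat \<Rightarrow> 'a mpoly. (\<forall>j<m. mpoly_in_vars n (ps j))
        \<and> (\<forall>x\<in>vecs n. \<forall>j<m. f x j = mpoly_eval (ps j) x)"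
proof -
  have reg: "regular_ring TYPE('a)" using cfg unfolding CFG_ring_def by (rule conjunct1)
  have "\<exists>F::'a set. finite F \<and> (\<forall>x. \<exists>xs as. set xs \<subseteq> F \<and> convex_comb x xs as)"
    using cfg unfolding CFG_ring_def by (rule conjunct2[OF conjunct2])
  then obtain F :: "'a set" where F: "finite F" and cover: "\<forall>x::'a. \<exists>xs as. set xs \<subseteq> F \<and> convex_comb x xs as"
    by blast
  define N :: nat where "N = fact (card F)"
  have N1: "N \<ge> 1" unfolding N_def by simp
  have idem: "y ^ N * y ^ N = y ^ N" for y :: 'a
    unfolding N_def by (rule power_idem[OF reg F cover])
  define \<delta> where "\<delta> c x = (\<Prod>i\<in>{..<n}. 1 - (x i - c i) ^ N)" for c x :: "nat \<Rightarrow> 'a"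
  have \<delta>poly: "polyfun n (\<delta> c)" for c
  proof -
    have "polyfun n (\<lambda>x. \<Prod>i\<in>{..<n}. 1 - (x i - c i) ^ N)"
    proof (rule polyfun_prod)
      fix i assume "i \<in> {..<n}"
      then have pi: "polyfun n (\<lambda>x. x i - c i)" by (intro polyfun_diff polyfun_var polyfun_const) auto
      show "polyfun n (\<lambda>x. 1 - (x i - c i) ^ N)"
        using polyfun_diff[OF polyfun_const polyfun_pow[OF pi]] by simp
    qed
    moreover have "\<delta> c = (\<lambda>x. \<Prod>i\<in>{..<n}. 1 - (x i - c i) ^ N)" by (rule ext) (simp add: \<delta>_def)
    ultimately show ?thesis by simp
  qed
  have \<delta>kill: "\<delta> c x * (x i - c i) = 0" if "i < n" for c x i
  proof -
    have e: "\<delta> c x = (1 - (x i - c i) ^ N) * (\<Prod>i'\<in>{..<n} - {i}. 1 - (x i' - c i') ^ N)"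
      unfolding \<delta>_def using that by (simp add: prod.remove)
    have "(1 - (x i - c i) ^ N) * (x i - c i) = 0"
      by (rule one_minus_pow_kill[OF reg idem])
    from kill3[OF this] show ?thesis unfolding e .
  qed
  define vec where "vec v = (\<lambda>i. if i < n then v i else (0::'a))" for v :: "nat \<Rightarrow> 'a"
  define C where "C = vec ` PiE {..<n} (\<lambda>_. F)"
  have "finite (PiE {..<n} (\<lambda>_. F))" using F by (simp add: finite_PiE)
  then have Cfin: "finite C" unfolding C_def by (rule finite_imageI)
  obtain cs where cs: "set cs = C" "distinct cs" using finite_distinct_list[OF Cfin] by blast
  have Cvec: "c \<in> vecs n" if "c \<in> C" for c
  proof -
    obtain v where "c = vec v" using \<open>c \<in> C\<close> unfolding C_def by blast
    then show ?thesis unfolding vec_def vecs_def by simp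
  qed
  define g where "g j = itp \<delta> (\<lambda>c. f c j) cs" for j
  have gpoly: "polyfun n (g j)" for j unfolding g_def by (rule itp_poly[OF \<delta>poly])
  have gval: "f x j = g j x" if x: "x \<in> vecs n" and j: "j < m" for x j
  proof -
    have l: "\<forall>c\<in>set cs. \<delta> c x * (f x j - f c j) = 0"
    proof
      fix c assume "c \<in> set cs"
      then have c: "c \<in> vecs n" using cs Cvec by blast
      have L: "\<And>x y e. x \<in> vecs n \<Longrightarrow> y \<in> vecs n \<Longrightarrow> (\<forall>i<n. e * (x i - y i) = 0) \<Longrightarrow> \<forall>j<m. e * (f x j - f y j) = 0"
        using loc unfolding local_fn_def by blast
      have "\<forall>i<n. \<delta> c x * (x i - c i) = 0" using \<delta>kill by blast
      from L[OF x c this] j show "\<delta> c x * (f x j - f c j) = 0" by blast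
    qed
    obtain \<beta> where s: "(\<Sum>v\<in>PiE {..<n} (\<lambda>_. F). \<beta> v) = 1"
      and k: "\<And>v i. v \<in> PiE {..<n} (\<lambda>_. F) \<Longrightarrow> i < n \<Longrightarrow> \<beta> v * (x i - v i) = 0"
      using blocks_exist[OF reg F cover, where z=x and k=n] by blast
    let ?Q = "prod_list (map (\<lambda>c. 1 - \<delta> c x) cs)"
    have Q: "?Q = (\<Prod>c\<in>C. 1 - \<delta> c x)" using prod.distinct_set_conv_list[OF cs(2), of "\<lambda>c. 1 - \<delta> c x"] cs(1) by simp
    have bQ: "\<beta> v * ?Q = 0" if v: "v \<in> PiE {..<n} (\<lambda>_. F)" for v
    proof -
      have vC: "vec v \<in> C" unfolding C_def using v by blast
      have "\<beta> v * \<delta> (vec v) x = \<beta> v * (\<Prod>i\<in>{..<n}. 1)" unfolding \<delta>_def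
      proof (rule congr_prod)
        fix i assume i: "i \<in> {..<n}"
        then have "\<beta> v * (x i - vec v i) ^ N = 0"
          using k[OF v, of i] kill_pow[OF _ N1] by (simp add: vec_def)
        then show "\<beta> v * (1 - (x i - vec v i) ^ N) = \<beta> v * 1" by (simp add: right_diff_distrib)
      qed
      then have b1: "\<beta> v * (1 - \<delta> (vec v) x) = 0" by (simp add: right_diff_distrib)
      have "?Q = (1 - \<delta> (vec v) x) * (\<Prod>c\<in>C - {vec v}. 1 - \<delta> c x)"
        unfolding Q using vC Cfin by (simp add: prod.remove)
      then show ?thesis using b1 kill2 by simp
    qed
    have "?Q = (\<Sum>v\<in>PiE {..<n} (\<lambda>_. F). \<beta> v) * ?Q" using s by simp
    also have "\<dots> = 0" unfolding sum_distrib_right using bQ by simp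
    finally have Q0: "?Q = 0" .
    have "?Q * f x j + itp \<delta> (\<lambda>c. f c j) cs x = f x j"
      by (rule itp_eq) (use l in simp)
    then show ?thesis using Q0 unfolding g_def by simp
  qed
  have "\<forall>j. \<exists>p. mpoly_in_vars n p \<and> (\<forall>x. g j x = mpoly_eval p x)"
    using gpoly unfolding polyfun_def by blast
  then obtain ps where ps: "\<And>j. mpoly_in_vars n (ps j) \<and> (\<forall>x. g j x = mpoly_eval (ps j) x)"
    using choice[of "\<lambda>j p. mpoly_in_vars n p \<and> (\<forall>x. g j x = mpoly_eval p x)"] by blast
  show ?thesis
  proof (intro exI[of _ ps] conjI allI impI ballI)
    fix j assume "j < m" then show "mpoly_in_vars n (ps j)" using ps by blast
  next
    fix x :: "nat \<Rightarrow> 'a" and j assume "x \<in> vecs n" "j < m"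
    then have "f x j = g j x" by (rule gval)
    also have "\<dots> = mpoly_eval (ps j) x" using ps by blast
    finally show "f x j = mpoly_eval (ps j) x" .
  qed
qed

theorem mainTheorem2:
  fixes f :: "(nat \<Rightarrow> 'a::comm_ring_1) \<Rightarrow> (nat \<Rightarrow> 'a)" and n m :: nat
  assumes "CFG_ring TYPE('a)"
    and "n \<ge> 1" and "m \<ge> 1"
    and "\<forall>x\<in>vecs n. f x \<in> vecs m"
  shows "contractive n m f \<longleftrightarrow>
    (\<exists>ps :: nat \<Rightarrow> 'a mpoly. (\<forall>j<m. mpoly_in_vars n (ps j))
        \<and> (\<forall>x\<in>vecs n. \<forall>j<m. f x j = mpoly_eval (ps j) x))"
proof -
  have reg: "regular_ring TYPE('a)" using assms(1) unfolding CFG_ring_def by (rule conjunct1)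
  show ?thesis
  proof
    assume "contractive n m f"
    then have "local_fn n m f" using contractive_iff_local[OF reg] by blast
    then show "\<exists>ps :: nat \<Rightarrow> 'a mpoly. (\<forall>j<m. mpoly_in_vars n (ps j))
        \<and> (\<forall>x\<in>vecs n. \<forall>j<m. f x j = mpoly_eval (ps j) x)"
      by (rule forward[OF assms(1)])
  next
    assume "\<exists>ps :: nat \<Rightarrow> 'a mpoly. (\<forall>j<m. mpoly_in_vars n (ps j))
        \<and> (\<forall>x\<in>vecs n. \<forall>j<m. f x j = mpoly_eval (ps j) x)"
    then obtain ps :: "nat \<Rightarrow> 'a mpoly" where ps: "\<forall>j<m. mpoly_in_vars n (ps j)"
      and fe: "\<forall>x\<in>vecs n. \<forall>j<m. f x j = mpoly_eval (ps j) x" by blast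
    have "local_fn n m f" unfolding local_fn_def
    proof (intro ballI allI impI)
      fix x y :: "nat \<Rightarrow> 'a" and e :: 'a and j
      assume x: "x \<in> vecs n" and y: "y \<in> vecs n" and exy: "\<forall>i<n. e * (x i - y i) = 0" and j: "j < m"
      have "e * mpoly_eval (ps j) x = e * mpoly_eval (ps j) y"
        using ps j exy by (intro eval_local) auto
      moreover have "f x j = mpoly_eval (ps j) x" "f y j = mpoly_eval (ps j) y" using fe x y j by auto
      ultimately show "e * (f x j - f y j) = 0" by (simp add: right_diff_distrib)
    qed
    then show "contractive n m f" using contractive_iff_local[OF reg] by blast
  qed
qed

end
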